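(* Let $\mathcal{X}$ be a finite set and $\underline{T}$ a lower transition operator on $\mathcal{L}(\mathcal{X})$. Let $\mathcal{X}'_{\mathrm{RA}}\coloneqq\{x\in\mathcal{X}\colon\exists n\in\mathbb{N}\ \forall k\ge n,\ \min\overline{T}^k\mathbb{I}_x>0\}$. Then $\underline{T}$ is regularly absorbing if and only if $\mathcal{X}'_{\mathrm{RA}}\neq\emptyset$ and for every $x\in\mathcal{X}\setminus\mathcal{X}'_{\mathrm{RA}}$ there is $n\in\mathbb{N}$ with $\overline{T}^n\mathbb{I}_{\mathcal{X}\setminus\mathcal{X}'_{\mathrm{RA}}}(x)<1$. Furthermore, $\mathcal{X}'_{\mathrm{RA}}=\mathcal{X}_{\mathrm{RA}}$.
   Context: $\mathcal{L}(\mathcal{X})$ is the set of real-valued functions on $\mathcal{X}$ with pointwise operations and order, real constants identified with constant functions, $\mathbb{I}_A$ the indicator of $A\subseteq\mathcal{X}$, $\mathbb{I}_x\coloneqq\mathbb{I}_{\{x\}}$; $\mathbb{N}=\{1,2,\dots\}$. A lower transition operator is a map $\underline{T}\colon\mathcal{L}(\mathcal{X})\to\mathcal{L}(\mathcal{X})$ such that for all $f,g$ and $\lambda\ge0$: $\underline{T}f\ge\min f$; $\underline{T}(f+g)\ge\underline{T}f+\underline{T}g$; $\underline{T}(\lambda f)=\lambda\underline{T}f$. Its upper transition operator is $\overline{T}f\coloneqq-\underline{T}(-f)$; powers denote composition. $\mathcal{X}_{\mathrm{RA}}\coloneqq\{x\in\mathcal{X}\colon\exists n\in\mathbb{N},\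 \min\overline{T}^n\mathbb{I}_x>0\}$, and $\underline{T}$ is regularly absorbing if $\mathcal{X}_{\mathrm{RA}}\ne\emptyset$ and for every $x\in\mathcal{X}\setminus\mathcal{X}_{\mathrm{RA}}$ there is $n\in\mathbb{N}$ with $\underline{T}^n\mathbb{I}_{\mathcal{X}_{\mathrm{RA}}}(x)>0$. *)

theory Defs
  imports Complex_Main
begin

definition fmin :: "('x::finite \<Rightarrow> real) \<Rightarrow> real" where
  "fmin f = Min (range f)"

definition ind :: "'x set \<Rightarrow> 'x \<Rightarrow> real" where
  "ind A = (\<lambda>y. if y \<in> A then 1 else 0)"

definition lower_transition_operator :: "(('x::finite \<Rightarrow> real) \<Rightarrow> ('x \<Rightarrow> real)) \<Rightarrow> bool" where
  "lower_transition_operator T \<longleftrightarrow>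
     (\<forall>f. \<forall>x. T f x \<ge> fmin f) \<and>
     (\<forall>f g. \<forall>x. T (\<lambda>y. f y + g y) x \<ge> T f x + T g x) \<and>
     (\<forall>f (c::real). c \<ge> 0 \<longrightarrow> T (\<lambda>y. c * f y) = (\<lambda>x. c * T f x))"

definition upper_op :: "(('x \<Rightarrow> real) \<Rightarrow> ('x \<Rightarrow> real)) \<Rightarrow> ('x \<Rightarrow> real) \<Rightarrow> ('x \<Rightarrow> real)" where
  "upper_op T f = (\<lambda>x. - T (\<lambda>y. - f y) x)"

definition X_RA :: "(('x::finite \<Rightarrow> real) \<Rightarrow> ('x \<Rightarrow> real)) \<Rightarrow> 'x set" where
  "X_RA T = {x. \<exists>n::nat. n \<ge> 1 \<and> fmin ((upper_op T ^^ n) (ind {x})) > 0}"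

definition regularly_absorbing :: "(('x::finite \<Rightarrow> real) \<Rightarrow> ('x \<Rightarrow> real)) \<Rightarrow> bool" where
  "regularly_absorbing T \<longleftrightarrow> X_RA T \<noteq> {} \<and>
     (\<forall>x \<in> - X_RA T. \<exists>n::nat. n \<ge> 1 \<and> (T ^^ n) (ind (X_RA T)) x > 0)"

definition X_RA' :: "(('x::finite \<Rightarrow> real) \<Rightarrow> ('x \<Rightarrow> real)) \<Rightarrow> 'x set" where
  "X_RA' T = {x. \<exists>n::nat. n \<ge> 1 \<and> (\<forall>k\<ge>n. fmin ((upper_op T ^^ k) (ind {x})) > 0)}"

end

theory Submission
  imports Defs
begin

lemma fmin_le: "fmin f \<le> f y"
  unfolding fmin_def by (rule Min_le) auto

lemma fmin_ge: "(\<And>y. c \<le> f y) \<Longrightarrow> c \<le> fmin (f::'x::finite\<Rightarrow>real)"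
  unfolding fmin_def by (subst Min_ge_iff) auto

lemma fmin_const: "fmin (\<lambda>_::'x::finite. c) = c"
  by (metis fmin_ge fmin_le order_antisym order_refl)

locale LTO =
  fixes T :: "('x::finite \<Rightarrow> real) \<Rightarrow> ('x \<Rightarrow> real)"
  assumes lto: "lower_transition_operator T"
begin

lemma bound: "T f x \<ge> fmin f"
  using lto unfolding lower_transition_operator_def by blast
lemma supadd: "T (\<lambda>y. f y + g y) x \<ge> T f x + T g x"
  using lto unfolding lower_transition_operator_def by blast
lemma hom: "c \<ge> 0 \<Longrightarrow> T (\<lambda>y. c * f y) = (\<lambda>x. c * T f x)"
  using lto unfolding lower_transition_operator_def by blast

lemma zero: "T (\<lambda>_. 0) x = 0"
proof -
  have "T (\<lambda>y. 0 * (\<lambda>_. 0::real) y) = (\<lambda>x. 0 * T (\<lambda>_. 0) x)" by (rule hom) simp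
  thus ?thesis by simp
qed

lemma const: "T (\<lambda>_. c) x = c"
proof -
  have a: "T (\<lambda>_. c) x \<ge> c" using bound[of "\<lambda>_. c"] by (simp add: fmin_const)
  have b: "T (\<lambda>_. -c) x \<ge> -c" using bound[of "\<lambda>_. -c"] by (simp add: fmin_const)
  have "T (\<lambda>y. c + -c) x \<ge> T (\<lambda>_. c) x + T (\<lambda>_. -c) x" by (rule supadd)
  hence "0 \<ge> T (\<lambda>_. c) x + T (\<lambda>_. -c) x" using zero by simp
  with a b show ?thesis by linarith
qed

lemma addc: "T (\<lambda>y. f y + c) x = T f x + c"
proof -
  have "T (\<lambda>y. f y + c) x \<ge> T f x + T (\<lambda>_. c) x" by (rule supadd)
  moreover have "T (\<lambda>y. (f y + c) + -c) x \<ge> T (\<lambda>y. f y + c) x + T (\<lambda>_. -c) x" by (rule supadd)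
  ultimately show ?thesis using const[of c x] const[of "-c" x] by simp
qed

lemma mono: "(\<And>y. f y \<le> g y) \<Longrightarrow> T f x \<le> T g x"
proof -
  assume h: "\<And>y. f y \<le> g y"
  have "T (\<lambda>y. f y + (g y - f y)) x \<ge> T f x + T (\<lambda>y. g y - f y) x" by (rule supadd)
  moreover have "T (\<lambda>y. g y - f y) x \<ge> 0"
    using bound[of "\<lambda>y. g y - f y" x] fmin_ge[of 0 "\<lambda>y. g y - f y"] h by force
  ultimately show ?thesis by simp
qed

lemma umono: "(\<And>y. f y \<le> g y) \<Longrightarrow> upper_op T f x \<le> upper_op T g x"
  unfolding upper_op_def using mono[of "\<lambda>y. - g y" "\<lambda>y. - f y" x] by simp

lemma uconst: "upper_op T (\<lambda>_. c) = (\<lambda>_. c)"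
  unfolding upper_op_def using const[of "-c"] by simp

lemma upow_mono: "(\<And>y. f y \<le> g y) \<Longrightarrow> (upper_op T ^^ n) f x \<le> (upper_op T ^^ n) g x"
proof (induction n arbitrary: x)
  case 0 then show ?case by simp
next
  case (Suc n) then show ?case by (simp add: umono)
qed

lemma upow_const: "(upper_op T ^^ n) (\<lambda>_. c) = (\<lambda>_. c)"
  by (induction n) (simp_all add: uconst)

lemma upow_compl: "(upper_op T ^^ n) (\<lambda>y. 1 - f y) = (\<lambda>x. 1 - (T ^^ n) f x)"
proof (induction n)
  case 0 then show ?case by simp
next
  case (Suc n)
  have "upper_op T (\<lambda>x. 1 - (T ^^ n) f x) = (\<lambda>x. 1 - T ((T ^^ n) f) x)"
    unfolding upper_op_def using addc[of "(T ^^ n) f" "-1"] by (simp add: fun_eq_iff)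
  with Suc show ?case by simp
qed

lemma XRA_eq: "X_RA' T = X_RA T"
proof
  show "X_RA' T \<subseteq> X_RA T" unfolding X_RA'_def X_RA_def by auto
next
  show "X_RA T \<subseteq> X_RA' T"
  proof
    fix x assume "x \<in> X_RA T"
    then obtain n where n: "n \<ge> 1" and p: "fmin ((upper_op T ^^ n) (ind {x})) > 0"
      unfolding X_RA_def by auto
    define e where "e = fmin ((upper_op T ^^ n) (ind {x}))"
    have "\<forall>k\<ge>n. fmin ((upper_op T ^^ k) (ind {x})) > 0"
    proof (intro allI impI)
      fix k assume "k \<ge> n"
      then have k: "k = (k - n) + n" by simp
      have "\<And>y. e \<le> (upper_op T ^^ k) (ind {x}) y"
      proof -
        fix y
        have "(upper_op T ^^ (k - n)) (\<lambda>_. e) y \<le> (upper_op T ^^ (k - n)) ((upper_op T ^^ n) (ind {x})) y"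
          by (rule upow_mono) (simp add: e_def fmin_le)
        also have "\<dots> = (upper_op T ^^ k) (ind {x}) y"
          by (subst k) (simp add: funpow_add)
        finally show "e \<le> (upper_op T ^^ k) (ind {x}) y" by (simp add: upow_const)
      qed
      hence "e \<le> fmin ((upper_op T ^^ k) (ind {x}))" by (rule fmin_ge)
      with p show "fmin ((upper_op T ^^ k) (ind {x})) > 0" unfolding e_def by linarith
    qed
    with n show "x \<in> X_RA' T" unfolding X_RA'_def by auto
  qed
qed

end

theorem lemma1:
  fixes T :: "('x::finite \<Rightarrow> real) \<Rightarrow> ('x \<Rightarrow> real)"
  assumes "lower_transition_operator T"
  shows "(regularly_absorbing T \<longleftrightarrow>
           X_RA' T \<noteq> {} \<and>
           (\<forall>x \<in> - X_RA' T. \<exists>n::nat. n \<ge> 1 \<and> (upper_op T ^^ n) (ind (- X_RA' T)) x < 1))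
         \<and> X_RA' T = X_RA T"
proof -
  interpret LTO T using assms by unfold_locales
  have e: "X_RA' T = X_RA T" by (rule XRA_eq)
  have i: "ind (- X_RA T) = (\<lambda>y. 1 - ind (X_RA T) y)"
    unfolding ind_def by auto
  have "\<And>n x. (upper_op T ^^ n) (ind (- X_RA T)) x < 1 \<longleftrightarrow> (T ^^ n) (ind (X_RA T)) x > 0"
    unfolding i upow_compl by simp
  then show ?thesis unfolding e regularly_absorbing_def by simp
qed

end
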